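(* Let $G$ and $H$ be nontrivial connected graphs with $\gamma_t(H)=2$. Then $\gamma_t(G)=\gamma_t(G\Box H)$ if and only if one of the following holds: (i) $G$ is isomorphic to $K_2$ and $\gamma(H)=1$; (ii) $H$ is isomorphic to $K_2$ and $G\in\mathcal{F}_1\cup\mathcal{F}_2\cup\mathcal{F}_3$.
   Context: All graphs are finite, simple, undirected. $\gamma(G)$ is the domination number and $\gamma_t(G)$ the total domination number (minimum size of a set $S$ with $N_G(S)=V(G)$, $N_G(S)$ the union of open neighborhoods of vertices of $S$). $G\Box H$ is the Cartesian product: vertex set $V(G)\times V(H)$, with $(u_1,v_1)\sim(u_2,v_2)$ iff either $u_1=u_2$ and $v_1v_2\in E(H)$, or $v_1=v_2$ and $u_1u_2\in E(G)$. $G[X]$ denotes the induced subgraph. The families are: $\mathcal{F}_1$ = graphs $G$ with $\gamma_t(G)=2\gamma(G)$; $\mathcal{F}_2$ = graphs $G$ having a minimum total dominating set $D$ that can be partitioned into two nonempty subsets $D_1,D_2$ with $D_1=V(G)\setminus N_G(D_2)$ and $D_2=V(G)\setminus N_G(D_1)$; $\mathcal{F}_3$ = graphs $G$ whose vertex set can be partitioned into two nonempty subsets $V_1,V_2$ with $G[V_1]\in\mathcal{F}_1$, $G[V_2]\in\mathcal{F}_2$, and $\gamma_t(G)=\gamma_t(G[V_1])+\gamma_t(G[V_2])$. *)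

theory Defs
  imports Main
begin

definition graph :: "'a set \<Rightarrow> ('a \<Rightarrow> 'a \<Rightarrow> bool) \<Rightarrow> bool" where
  "graph V E \<longleftrightarrow> finite V \<and> (\<forall>x y. E x y \<longrightarrow> x \<in> V \<and> y \<in> V)
     \<and> (\<forall>x y. E x y \<longrightarrow> E y x) \<and> (\<forall>x. \<not> E x x)"

definition connected_graph :: "'a set \<Rightarrow> ('a \<Rightarrow> 'a \<Rightarrow> bool) \<Rightarrow> bool" where
  "connected_graph V E \<longleftrightarrow> (\<forall>x\<in>V. \<forall>y\<in>V. E\<^sup>*\<^sup>* x y)"

definition nontrivial_graph :: "'a set \<Rightarrow> ('a \<Rightarrow> 'a \<Rightarrow> bool) \<Rightarrow> bool" where
  "nontrivial_graph V E \<longleftrightarrow> card V \<ge> 2"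

definition nbhd :: "'a set \<Rightarrow> ('a \<Rightarrow> 'a \<Rightarrow> bool) \<Rightarrow> 'a set \<Rightarrow> 'a set" where
  "nbhd V E S = {v \<in> V. \<exists>u\<in>S. E u v}"

definition dominating_set :: "'a set \<Rightarrow> ('a \<Rightarrow> 'a \<Rightarrow> bool) \<Rightarrow> 'a set \<Rightarrow> bool" where
  "dominating_set V E S \<longleftrightarrow> S \<subseteq> V \<and> (\<forall>v\<in>V. v \<in> S \<or> (\<exists>u\<in>S. E u v))"

definition total_dominating_set :: "'a set \<Rightarrow> ('a \<Rightarrow> 'a \<Rightarrow> bool) \<Rightarrow> 'a set \<Rightarrow> bool" where
  "total_dominating_set V E S \<longleftrightarrow> S \<subseteq> V \<and> nbhd V E S = V"

definition domination_number :: "'a set \<Rightarrow> ('a \<Rightarrow> 'a \<Rightarrow> bool) \<Rightarrow> nat" where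
  "domination_number V E = Inf {card S | S. dominating_set V E S}"

(* Inf {} = 0 on nat; only used for graphs that have a total dominating set *)
definition total_domination_number :: "'a set \<Rightarrow> ('a \<Rightarrow> 'a \<Rightarrow> bool) \<Rightarrow> nat" where
  "total_domination_number V E = Inf {card S | S. total_dominating_set V E S}"

definition induced_edges :: "('a \<Rightarrow> 'a \<Rightarrow> bool) \<Rightarrow> 'a set \<Rightarrow> 'a \<Rightarrow> 'a \<Rightarrow> bool" where
  "induced_edges E X = (\<lambda>x y. E x y \<and> x \<in> X \<and> y \<in> X)"

definition cart_edges :: "'a set \<Rightarrow> ('a \<Rightarrow> 'a \<Rightarrow> bool) \<Rightarrow> 'b set \<Rightarrow> ('b \<Rightarrow> 'b \<Rightarrow> bool)
    \<Rightarrow> ('a \<times> 'b) \<Rightarrow> ('a \<times> 'b) \<Rightarrow> bool" where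
  "cart_edges VG EG VH EH = (\<lambda>(u1, v1) (u2, v2).
     u1 \<in> VG \<and> u2 \<in> VG \<and> v1 \<in> VH \<and> v2 \<in> VH \<and>
     ((u1 = u2 \<and> EH v1 v2) \<or> (v1 = v2 \<and> EG u1 u2)))"

definition graph_iso :: "'a set \<Rightarrow> ('a \<Rightarrow> 'a \<Rightarrow> bool) \<Rightarrow> 'b set \<Rightarrow> ('b \<Rightarrow> 'b \<Rightarrow> bool) \<Rightarrow> bool" where
  "graph_iso V E V' E' \<longleftrightarrow> (\<exists>f. bij_betw f V V' \<and> (\<forall>x\<in>V. \<forall>y\<in>V. E x y \<longleftrightarrow> E' (f x) (f y)))"

definition K2_V :: "bool set" where "K2_V = UNIV"
definition K2_E :: "bool \<Rightarrow> bool \<Rightarrow> bool" where "K2_E = (\<lambda>x y. x \<noteq> y)"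

definition in_F1 :: "'a set \<Rightarrow> ('a \<Rightarrow> 'a \<Rightarrow> bool) \<Rightarrow> bool" where
  "in_F1 V E \<longleftrightarrow> (\<exists>S. total_dominating_set V E S) \<and>
     total_domination_number V E = 2 * domination_number V E"

definition in_F2 :: "'a set \<Rightarrow> ('a \<Rightarrow> 'a \<Rightarrow> bool) \<Rightarrow> bool" where
  "in_F2 V E \<longleftrightarrow> (\<exists>D D1 D2. total_dominating_set V E D \<and>
      card D = total_domination_number V E \<and>
      D1 \<noteq> {} \<and> D2 \<noteq> {} \<and> D1 \<union> D2 = D \<and> D1 \<inter> D2 = {} \<and>
      D1 = V - nbhd V E D2 \<and> D2 = V - nbhd V E D1)"

definition in_F3 :: "'a set \<Rightarrow> ('a \<Rightarrow> 'a \<Rightarrow> bool) \<Rightarrow> bool" where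
  "in_F3 V E \<longleftrightarrow> (\<exists>V1 V2. V1 \<noteq> {} \<and> V2 \<noteq> {} \<and> V1 \<union> V2 = V \<and> V1 \<inter> V2 = {} \<and>
      in_F1 V1 (induced_edges E V1) \<and> in_F2 V2 (induced_edges E V2) \<and>
      total_domination_number V E =
        total_domination_number V1 (induced_edges E V1) + total_domination_number V2 (induced_edges E V2))"

end

theory Submission
  imports Defs
begin

lemma nbhd_iff: "v \<in> nbhd V E S \<longleftrightarrow> v \<in> V \<and> (\<exists>u\<in>S. E u v)"
  by (simp add: nbhd_def)

lemma graphD: assumes "graph V E"
  shows "finite V" "E x y \<Longrightarrow> x \<in> V" "E x y \<Longrightarrow> y \<in> V" "E x y \<Longrightarrow> E y x" "\<not> E x x"
  using assms unfolding graph_def by blast+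

lemma tds_iff: "total_dominating_set V E S \<longleftrightarrow> S \<subseteq> V \<and> (\<forall>v\<in>V. \<exists>u\<in>S. E u v)"
  unfolding total_dominating_set_def nbhd_def by blast

lemma tdn_le: assumes "total_dominating_set V E S"
  shows "total_domination_number V E \<le> card S"
  unfolding total_domination_number_def
  by (rule cInf_lower) (use assms in auto)

lemma tdn_attained: assumes "total_dominating_set V E S0"
  obtains S where "total_dominating_set V E S" "card S = total_domination_number V E"
proof -
  have "{card S | S. total_dominating_set V E S} \<noteq> {}" using assms by auto
  from Inf_nat_def1[OF this] show ?thesis using that
    unfolding total_domination_number_def by auto
qed

lemma dn_le: assumes "dominating_set V E S"
  shows "domination_number V E \<le> card S"
  unfolding domination_number_def
  by (rule cInf_lower) (use assms in auto)

lemma dn_attained: assumes "dominating_set V E S0"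
  obtains S where "dominating_set V E S" "card S = domination_number V E"
proof -
  have "{card S | S. dominating_set V E S} \<noteq> {}" using assms by auto
  from Inf_nat_def1[OF this] show ?thesis using that
    unfolding domination_number_def by auto
qed

lemma tds_card_ge2:
  assumes "graph V E" "total_dominating_set V E S" "V \<noteq> {}"
  shows "2 \<le> card S"
proof -
  obtain v where v: "v \<in> V" using assms(3) by auto
  then obtain u where u: "u \<in> S" "E u v" using assms(2) unfolding tds_iff by auto
  have "u \<in> V" using u assms(1) graphD by metis
  then obtain w where w: "w \<in> S" "E w u" using assms(2) unfolding tds_iff by auto
  have "w \<noteq> u" using w graphD[OF assms(1)] by metis
  have fin: "finite S" using assms(1,2) graphD(1) finite_subset unfolding tds_iff by metis
  have "{u, w} \<subseteq> S" using u w by auto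
  from card_mono[OF fin this] show ?thesis using \<open>w \<noteq> u\<close> by auto
qed

lemma conn_edge_out:
  assumes "graph V E" "connected_graph V E" "A \<subseteq> V" "x \<in> A" "y \<in> V" "y \<notin> A"
  shows "\<exists>a\<in>A. \<exists>b\<in>V - A. E a b"
proof -
  have "E\<^sup>*\<^sup>* x y" using assms(2,3,4,5) unfolding connected_graph_def by auto
  then have "y \<notin> A \<Longrightarrow> \<exists>a\<in>A. \<exists>b. b \<notin> A \<and> E a b"
  proof (induction rule: rtranclp_induct)
    case base then show ?case using assms(4) by auto
  next
    case (step y z)
    then show ?case by (cases "y \<in> A") auto
  qed
  then obtain a b where "a \<in> A" "b \<notin> A" "E a b" using assms(6) by auto
  then show ?thesis using graphD(3)[OF assms(1)] by auto
qed

lemma noiso: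
  assumes "graph V E" "connected_graph V E" "nontrivial_graph V E" "x \<in> V"
  shows "\<exists>y. E x y"
proof -
  have "card V \<ge> 2" using assms(3) unfolding nontrivial_graph_def .
  have "\<exists>y. y \<in> V \<and> y \<noteq> x"
  proof (rule ccontr)
    assume "\<not> (\<exists>y. y \<in> V \<and> y \<noteq> x)"
    then have "V \<subseteq> {x}" by auto
    then have "card V \<le> card {x}" by (intro card_mono) auto
    then show False using \<open>card V \<ge> 2\<close> by simp
  qed
  then obtain y where y: "y \<in> V" "y \<noteq> x" by auto
  from conn_edge_out[OF assms(1,2), of "{x}" x y] y assms(4)
  show ?thesis by auto
qed

lemma ext_tds:
  assumes G: "graph V E" and ni: "\<forall>x\<in>V. \<exists>y. E x y" and X: "X \<subseteq> V" and R: "R \<subseteq> V"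
    and cov: "V - nbhd V E X \<subseteq> R"
  shows "\<exists>T. total_dominating_set V E T \<and> card T \<le> card X + card R"
proof -
  define g where "g r = (SOME y. E r y)" for r
  have g: "E r (g r)" if "r \<in> V" for r unfolding g_def using ni that by (metis someI_ex)
  define T where "T = X \<union> g ` R"
  have fin: "finite V" using G graphD by metis
  have "T \<subseteq> V" unfolding T_def using X R g graphD(3)[OF G] by blast
  moreover have "\<exists>u\<in>T. E u v" if "v \<in> V" for v
  proof (cases "v \<in> nbhd V E X")
    case True then show ?thesis unfolding T_def nbhd_iff by auto
  next
    case False
    then have "v \<in> R" using cov that by auto
    then show ?thesis unfolding T_def using g[OF that] graphD(4)[OF G] by auto
  qed
  moreover have "card T \<le> card X + card R"
  proof -
    have "card T \<le> card X + card (g ` R)" unfolding T_def by (rule card_Un_le)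
    also have "card (g ` R) \<le> card R" by (rule card_image_le) (use R fin finite_subset in auto)
    finally show ?thesis by simp
  qed
  ultimately show ?thesis unfolding tds_iff by blast
qed

lemma induced_graph: assumes "graph V E" "X \<subseteq> V" shows "graph X (induced_edges E X)"
  using assms finite_subset unfolding graph_def induced_edges_def by blast

lemma induced_all: assumes "graph V E" shows "induced_edges E V = E"
  using assms unfolding graph_def induced_edges_def by (intro ext) blast

lemma tds_induced_iff:
  "total_dominating_set X (induced_edges E X) T \<longleftrightarrow> T \<subseteq> X \<and> (\<forall>v\<in>X. \<exists>u\<in>T. E u v)"
  unfolding tds_iff induced_edges_def by blast

lemma tds_union:
  assumes "V1 \<union> V2 = V" "total_dominating_set V1 (induced_edges E V1) X"
    "total_dominating_set V2 (induced_edges E V2) Y"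
  shows "total_dominating_set V E (X \<union> Y)"
  using assms unfolding tds_induced_iff tds_iff induced_edges_def by blast

lemma sum_ge_const_eq:
  fixes f :: "'x \<Rightarrow> nat"
  assumes "finite A" "\<forall>x\<in>A. k \<le> f x" "sum f A \<le> k * card A" "x \<in> A"
  shows "f x = k"
proof (rule ccontr)
  assume "f x \<noteq> k"
  then have "x \<in> A \<and> k < f x" using assms by force
  then have "sum (\<lambda>_. k) A < sum f A"
    using sum_strict_mono_ex1[OF assms(1), of "\<lambda>_. k" f] assms(2) by blast
  then show False using assms(3) by (simp add: mult.commute)
qed

lemma LB:
  assumes G: "graph VG EG" and ni: "\<forall>x\<in>VG. \<exists>y. EG x y" and H: "graph VH EH" "VH \<noteq> {}"
    and S: "total_dominating_set (VG \<times> VH) (cart_edges VG EG VH EH) S"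
  defines "P \<equiv> fst ` S" and "R \<equiv> VG - nbhd VG EG (fst ` S)"
  shows "R \<subseteq> P" "\<forall>u\<in>R. 2 \<le> card {v. (u,v)\<in>S}"
    "\<forall>u\<in>P. 1 \<le> card {v. (u,v)\<in>S}"
    "card S = (\<Sum>u\<in>P. card {v. (u,v) \<in> S})"
    "card P + card R \<le> card S" "total_domination_number VG EG \<le> card P + card R"
    "\<forall>u\<in>R. total_dominating_set VH EH {v. (u,v)\<in>S}"
proof -
  have finG: "finite VG" and finH: "finite VH" using G H graphD by metis+
  have SV: "S \<subseteq> VG \<times> VH" using S unfolding tds_iff by blast
  have finS: "finite S" using SV finG finH finite_subset by blast
  have PV: "P \<subseteq> VG" using SV unfolding P_def by auto
  have finP: "finite P" using PV finG finite_subset by blast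
  have dom: "\<exists>(a,b)\<in>S. cart_edges VG EG VH EH (a,b) (u,v)" if "u \<in> VG" "v \<in> VH" for u v
    using S that unfolding tds_iff by blast
  have tdsR: "total_dominating_set VH EH {v. (u,v)\<in>S}" if u: "u \<in> R" for u
    unfolding tds_iff
  proof (intro conjI ballI)
    show "{v. (u, v) \<in> S} \<subseteq> VH" using SV by auto
  next
    fix v assume v: "v \<in> VH"
    have uG: "u \<in> VG" using u unfolding R_def by auto
    obtain a b where ab: "(a,b) \<in> S" "cart_edges VG EG VH EH (a,b) (u,v)" using dom[OF uG v] by blast
    have "\<not> (b = v \<and> EG a u)"
    proof
      assume "b = v \<and> EG a u"
      then have "u \<in> nbhd VG EG (fst ` S)" using ab(1) uG unfolding nbhd_iff by force
      then show False using u unfolding R_def by auto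
    qed
    then have "a = u" "EH b v" using ab(2) unfolding cart_edges_def by auto
    then show "\<exists>w\<in>{v. (u, v) \<in> S}. EH w v" using ab(1) by auto
  qed
  then show "\<forall>u\<in>R. total_dominating_set VH EH {v. (u,v)\<in>S}" by blast
  have c2: "2 \<le> card {v. (u,v)\<in>S}" if "u \<in> R" for u
    using tds_card_ge2[OF H(1) tdsR[OF that] H(2)] .
  then show "\<forall>u\<in>R. 2 \<le> card {v. (u,v)\<in>S}" by blast
  have finSu: "finite {v. (u,v)\<in>S}" for u
    using finite_subset[OF _ finH, of "{v. (u,v)\<in>S}"] SV by auto
  show RP: "R \<subseteq> P"
  proof
    fix u assume "u \<in> R"
    then have "{v. (u,v)\<in>S} \<noteq> {}" using c2 by (metis card.empty not_numeral_le_zero)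
    then show "u \<in> P" unfolding P_def by force
  qed
  have c1: "1 \<le> card {v. (u,v)\<in>S}" if "u \<in> P" for u
  proof -
    have "{v. (u,v)\<in>S} \<noteq> {}" using that unfolding P_def by force
    then show ?thesis using finSu card_0_eq[OF finSu] by fastforce
  qed
  then show "\<forall>u\<in>P. 1 \<le> card {v. (u,v)\<in>S}" by blast
  have "S = Sigma P (\<lambda>u. {v. (u,v)\<in>S})" unfolding P_def by force
  then show cS: "card S = (\<Sum>u\<in>P. card {v. (u,v) \<in> S})"
    using card_SigmaI[OF finP, of "\<lambda>u. {v. (u,v)\<in>S}"] finSu by simp
  have "(\<Sum>u\<in>P. card {v. (u,v) \<in> S}) = (\<Sum>u\<in>P-R. card {v. (u,v) \<in> S}) + (\<Sum>u\<in>R. card {v. (u,v) \<in> S})"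
    by (rule sum.subset_diff[OF RP finP])
  also have "\<dots> \<ge> (\<Sum>u\<in>P-R. 1) + (\<Sum>u\<in>R. 2)"
    by (intro add_mono sum_mono) (use c1 c2 in auto)
  finally have "card S \<ge> card (P - R) + 2 * card R" using cS by simp
  moreover have "card P = card (P - R) + card R"
    using card_Diff_subset[OF finite_subset[OF RP finP] RP] card_mono[OF finP RP] by simp
  ultimately show "card P + card R \<le> card S" by simp
  have RV: "R \<subseteq> VG" unfolding R_def by auto
  show "total_domination_number VG EG \<le> card P + card R"
    using ext_tds[OF G ni PV RV] tdn_le unfolding R_def P_def by fastforce
qed

lemma dn_eq1:
  assumes H: "graph VH EH" "VH \<noteq> {}" and w: "w \<in> VH" "\<forall>v\<in>VH. v \<noteq> w \<longrightarrow> EH w v"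
  shows "domination_number VH EH = 1"
proof -
  have d: "dominating_set VH EH {w}" unfolding dominating_set_def using w by auto
  then have le: "domination_number VH EH \<le> 1" using dn_le by fastforce
  obtain D where D: "dominating_set VH EH D" "card D = domination_number VH EH" using dn_attained[OF d] by blast
  have "D \<noteq> {}" using D(1) H(2) unfolding dominating_set_def by auto
  moreover have "finite D" using D(1) H(1) graphD(1) finite_subset unfolding dominating_set_def by metis
  ultimately have "card D \<noteq> 0" by simp
  then show ?thesis using le D(2) by simp
qed

lemma iso_K2:
  assumes G: "graph VG EG" and V: "VG = {p, q}" "p \<noteq> q" "EG p q"
  shows "graph_iso VG EG K2_V K2_E"
proof -
  have "bij_betw (\<lambda>x. x = p) VG K2_V"
    unfolding bij_betw_def inj_on_def K2_V_def using V by auto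
  moreover have "\<forall>x\<in>VG. \<forall>y\<in>VG. EG x y \<longleftrightarrow> K2_E (x = p) (y = p)"
    unfolding K2_E_def using V graphD(4,5)[OF G] by blast
  ultimately show ?thesis unfolding graph_iso_def by blast
qed

lemma VH3:
  assumes G: "graph VG EG" "connected_graph VG EG" "VG \<noteq> {}" and ni: "\<forall>x\<in>VG. \<exists>y. EG x y"
    and H: "graph VH EH" "3 \<le> card VH"
    and S: "total_dominating_set (VG \<times> VH) (cart_edges VG EG VH EH) S"
    and cS: "card S = total_domination_number VG EG"
  shows "graph_iso VG EG K2_V K2_E \<and> domination_number VH EH = 1"
proof -
  define t where "t = total_domination_number VG EG"
  define P where "P = fst ` S"
  define R where "R = VG - nbhd VG EG (fst ` S)"
  have finG: "finite VG" and finH: "finite VH" using G H graphD by metis+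
  have Hne: "VH \<noteq> {}" using H(2) by auto
  note lb = LB[OF G(1) ni H(1) Hne S, folded P_def R_def]
  have SV: "S \<subseteq> VG \<times> VH" using S unfolding tds_iff by blast
  have PV: "P \<subseteq> VG" using SV unfolding P_def by auto
  have finP: "finite P" using PV finG finite_subset by blast
  have finR: "finite R" using finG unfolding R_def by auto
  have tmin: "t \<le> card T" if "total_dominating_set VG EG T" for T using tdn_le[OF that] t_def by simp
  have eqPR: "card P + card R = t" using lb(5,6) cS t_def by simp
  have finSu: "finite {v. (u,v)\<in>S}" for u
    using finite_subset[OF _ finH, of "{v. (u,v)\<in>S}"] SV by auto
  have split: "card S = (\<Sum>u\<in>P-R. card {v. (u,v) \<in> S}) + (\<Sum>u\<in>R. card {v. (u,v) \<in> S})"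
    using lb(4) sum.subset_diff[OF lb(1) finP] by simp
  have s1: "(\<Sum>u\<in>P-R. card {v. (u,v) \<in> S}) \<ge> 1 * card (P - R)"
    using sum_mono[of "P-R" "\<lambda>_. 1::nat"] lb(3) by simp
  have s2: "(\<Sum>u\<in>R. card {v. (u,v) \<in> S}) \<ge> 2 * card R"
  proof -
    have "(\<Sum>u\<in>R. 2::nat) \<le> (\<Sum>u\<in>R. card {v. (u,v) \<in> S})" by (rule sum_mono) (use lb(2) in auto)
    then show ?thesis by (simp add: mult.commute)
  qed
  have cardP: "card P = card (P - R) + card R"
    using card_Diff_subset[OF finite_subset[OF lb(1) finP] lb(1)] card_mono[OF finP lb(1)] by simp
  have e1: "(\<Sum>u\<in>P-R. card {v. (u,v) \<in> S}) \<le> 1 * card (P - R)"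
    and e2: "(\<Sum>u\<in>R. card {v. (u,v) \<in> S}) \<le> 2 * card R"
    using split s1 s2 cardP eqPR cS t_def by linarith+
  have c2: "card {v. (u,v)\<in>S} = 2" if "u \<in> R" for u
    using sum_ge_const_eq[OF finR _ e2 that] lb(2) by blast
  have c1: "card {v. (u,v)\<in>S} = 1" if "u \<in> P - R" for u
    using sum_ge_const_eq[of "P - R" 1, OF _ _ e1 that] lb(3) finP by blast
  have dom: "\<exists>(a,b)\<in>S. cart_edges VG EG VH EH (a,b) (u,v)" if "u \<in> VG" "v \<in> VH" for u v
    using S that unfolding tds_iff by blast
  have domout: "\<exists>a\<in>P. EG a z \<and> (a, v) \<in> S" if zz: "z \<in> VG" "z \<notin> P" "v \<in> VH" for z v
  proof -
    obtain a b where ab: "(a,b)\<in>S" "cart_edges VG EG VH EH (a,b) (z,v)" using dom[OF zz(1,3)] by blast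
    have "a \<noteq> z" using ab(1) zz(2) unfolding P_def by force
    then have "b = v" "EG a z" using ab(2) unfolding cart_edges_def by auto
    then show ?thesis using ab(1) unfolding P_def by force
  qed
  have Rempty: "R = {}"
  proof (rule ccontr)
    assume "R \<noteq> {}"
    then obtain u where u: "u \<in> R" by auto
    have uP: "u \<in> P" using u lb(1) by auto
    have cov: "VG - nbhd VG EG (P - {u}) \<subseteq> R"
    proof
      fix z assume z: "z \<in> VG - nbhd VG EG (P - {u})"
      show "z \<in> R"
      proof (rule ccontr)
        assume "z \<notin> R"
        then have "z \<in> nbhd VG EG P" using z unfolding R_def P_def by auto
        then obtain p where p: "p \<in> P" "EG p z" unfolding nbhd_iff by auto
        have pu: "p = u"
        proof (rule ccontr)
          assume "p \<noteq> u"
          then have "z \<in> nbhd VG EG (P - {u})" using p z unfolding nbhd_iff by blast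
          then show False using z by blast
        qed
        have zP: "z \<notin> P"
        proof
          assume "z \<in> P"
          moreover have "EG z u" using p pu graphD(4)[OF G(1)] by blast
          moreover have "u \<in> VG" using uP PV by blast
          ultimately have "u \<in> nbhd VG EG (fst ` S)" unfolding nbhd_iff P_def by blast
          then show False using u unfolding R_def by auto
        qed
        have "VH \<subseteq> {v. (u,v)\<in>S}"
        proof
          fix v assume v: "v \<in> VH"
          obtain a where a: "a \<in> P" "EG a z" "(a,v)\<in>S" using domout[OF _ zP v] z by auto
          have "a = u"
          proof (rule ccontr)
            assume "a \<noteq> u"
            then have "z \<in> nbhd VG EG (P - {u})" using a z unfolding nbhd_iff by blast
            then show False using z by blast
          qed
          then show "v \<in> {v. (u,v)\<in>S}" using a by auto
        qed
        then have "card VH \<le> card {v. (u,v)\<in>S}" by (rule card_mono[OF finSu])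
        then have "card VH \<le> 2" using c2[OF u] by simp
        then show False using H(2) by simp
      qed
    qed
    have PuV: "P - {u} \<subseteq> VG" using PV by blast
    have RV: "R \<subseteq> VG" unfolding R_def by blast
    obtain T where T: "total_dominating_set VG EG T" "card T \<le> card (P - {u}) + card R"
      using ext_tds[OF G(1) ni PuV RV cov] by blast
    have "card (P - {u}) = card P - 1" using uP finP by simp
    moreover have "card P > 0" using uP finP card_gt_0_iff by blast
    ultimately have "card T < t" using T(2) eqPR by linarith
    then show False using tmin[OF T(1)] by simp
  qed
  define f where "f u = the_elem {v. (u,v)\<in>S}" for u
  have Su: "{v. (u,v)\<in>S} = {f u}" if "u \<in> P" for u
  proof -
    have "card {v. (u,v)\<in>S} = 1" using c1 that Rempty by auto
    then obtain x where "{v. (u,v)\<in>S} = {x}" using card_1_singletonE by blast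
    then show ?thesis unfolding f_def by simp
  qed
  have Sf: "(u,v) \<in> S \<longleftrightarrow> u \<in> P \<and> v = f u" for u v
  proof
    assume "(u,v) \<in> S"
    then have "u \<in> P" unfolding P_def by force
    then show "u \<in> P \<and> v = f u" using Su[of u] \<open>(u,v)\<in>S\<close> by blast
  next
    assume "u \<in> P \<and> v = f u"
    then show "(u,v) \<in> S" using Su[of u] by blast
  qed
  have fH: "f u \<in> VH" if "u \<in> P" for u using Sf[of u "f u"] that SV by auto
  have cardP: "card P = t" using eqPR Rempty by simp
  have dom1: "(z \<in> P \<and> EH (f z) v) \<or> (\<exists>p\<in>P. EG p z \<and> f p = v)" if zz: "z \<in> VG" "v \<in> VH" for z v
  proof -
    obtain a b where ab: "(a,b)\<in>S" "cart_edges VG EG VH EH (a,b) (z,v)" using dom[OF zz] by blast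
    then show ?thesis unfolding cart_edges_def using Sf by auto
  qed
  obtain A where A: "A \<subseteq> VH" "card A = 3" using obtain_subset_with_card_n H(2) by metis
  then obtain v1 v2 v3 where "A = {v1, v2, v3}" "v1 \<noteq> v2" "v2 \<noteq> v3" "v1 \<noteq> v3"
    unfolding card_3_iff by blast
  then have vs: "v1 \<in> VH" "v2 \<in> VH" "v3 \<in> VH" "v1 \<noteq> v2" "v1 \<noteq> v3" "v2 \<noteq> v3"
    using A(1) by auto
  have client: "\<exists>z\<in>P. (\<forall>q\<in>P. EG q z \<longleftrightarrow> q = p) \<and> f z = f p \<and> (\<forall>v\<in>VH. v \<noteq> f p \<longrightarrow> EH (f p) v)"
    if pP: "p \<in> P" for p
  proof -
    have "\<not> total_dominating_set VG EG (P - {p})"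
    proof
      assume "total_dominating_set VG EG (P - {p})"
      then have "t \<le> card (P - {p})" by (rule tmin)
      moreover have "card (P - {p}) = card P - 1" using pP finP by simp
      moreover have "card P > 0" using pP finP card_gt_0_iff by blast
      ultimately show False using cardP by linarith
    qed
    moreover have "P - {p} \<subseteq> VG" using PV by blast
    ultimately obtain z where z: "z \<in> VG" "\<forall>u\<in>P - {p}. \<not> EG u z" unfolding tds_iff by blast
    have zP: "z \<in> P"
    proof (rule ccontr)
      assume zn: "z \<notin> P"
      obtain p1 where p1: "p1 \<in> P" "EG p1 z" "f p1 = v1" using dom1[OF z(1) vs(1)] zn by blast
      then have "p1 = p" using z(2) by blast
      obtain p2 where p2: "p2 \<in> P" "EG p2 z" "f p2 = v2" using dom1[OF z(1) vs(2)] zn by blast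
      then have "p2 = p" using z(2) by blast
      show False using p1(3) p2(3) \<open>p1 = p\<close> \<open>p2 = p\<close> vs(4) by simp
    qed
    have "\<not> EH (f z) (f z)" using graphD(5)[OF H(1)] by blast
    then obtain q where q: "q \<in> P" "EG q z" "f q = f z" using dom1[OF z(1) fH[OF zP]] by blast
    then have "q = p" using z(2) by blast
    then have pz: "EG p z" "f p = f z" using q by auto
    have all: "\<forall>q\<in>P. EG q z \<longleftrightarrow> q = p"
    proof (intro ballI iffI)
      fix q assume "q \<in> P" "EG q z" then show "q = p" using z(2) by blast
    next
      fix q assume "q = p" then show "EG q z" using pz by simp
    qed
    have eh: "EH (f p) v" if vv: "v \<in> VH" "v \<noteq> f p" for v
    proof -
      have "\<not> (\<exists>p'\<in>P. EG p' z \<and> f p' = v)" using all vv(2) by auto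
      then show ?thesis using dom1[OF z(1) vv(1)] pz(2) by metis
    qed
    show ?thesis
      apply (rule bexI[of _ z])
      using all pz(2) eh zP by auto
  qed
  define c where "c p = (SOME z. z \<in> P \<and> (\<forall>q\<in>P. EG q z \<longleftrightarrow> q = p) \<and> f z = f p)" for p
  have cprop: "c p \<in> P" "\<forall>q\<in>P. EG q (c p) \<longleftrightarrow> q = p" "f (c p) = f p" if "p \<in> P" for p
  proof -
    have "\<exists>z. z \<in> P \<and> (\<forall>q\<in>P. EG q z \<longleftrightarrow> q = p) \<and> f z = f p" using client[OF that] by blast
    then have "c p \<in> P \<and> (\<forall>q\<in>P. EG q (c p) \<longleftrightarrow> q = p) \<and> f (c p) = f p"
      unfolding c_def by (rule someI_ex)
    then show "c p \<in> P" "\<forall>q\<in>P. EG q (c p) \<longleftrightarrow> q = p" "f (c p) = f p" by auto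
  qed
  have cc: "c (c p) = p" if pP: "p \<in> P" for p
  proof -
    have qP: "c p \<in> P" by (rule cprop(1)[OF pP])
    have "EG (c p) (c (c p))" using cprop(2)[OF qP] qP by simp
    then have "EG (c (c p)) (c p)" using graphD(4)[OF G(1)] by blast
    then show ?thesis using cprop(2)[OF pP] cprop(1)[OF qP] by simp
  qed
  have nbrP: "\<forall>q\<in>P. EG q p \<longleftrightarrow> q = c p" if pP: "p \<in> P" for p
  proof -
    have "\<forall>q\<in>P. EG q (c (c p)) \<longleftrightarrow> q = c p" by (rule cprop(2)[OF cprop(1)[OF pP]])
    then show ?thesis using cc[OF pP] by simp
  qed
  have domv: "\<forall>v\<in>VH. v \<noteq> f p \<longrightarrow> EH (f p) v" if "p \<in> P" for p
    using client[OF that] by blast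
  have VGP: "VG = P"
  proof (rule ccontr)
    assume "VG \<noteq> P"
    then obtain y where y: "y \<in> VG" "y \<notin> P" using PV by auto
    obtain p1 where p1: "p1 \<in> P" "EG p1 y" "f p1 = v1" using dom1[OF y(1) vs(1)] y(2) by blast
    obtain p2 where p2: "p2 \<in> P" "EG p2 y" "f p2 = v2" using dom1[OF y(1) vs(2)] y(2) by blast
    have c1P: "c p1 \<in> P" "f (c p1) = v1" using cprop[OF p1(1)] p1 by auto
    have c2P: "c p2 \<in> P" "f (c p2) = v2" using cprop[OF p2(1)] p2 by auto
    have cne: "c p1 \<noteq> c p2" using c1P c2P vs(4) by auto
    define T where "T = (P - {c p1, c p2}) \<union> {y}"
    have "card (P - {c p1, c p2}) = card P - 2" using c1P c2P cne finP by (simp add: card_Diff_subset)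
    moreover have "card T \<le> card (P - {c p1, c p2}) + 1" unfolding T_def
      using card_Un_le[of "P - {c p1, c p2}" "{y}"] by simp
    moreover have "card P \<ge> 2" using card_mono[OF finP, of "{c p1, c p2}"] c1P c2P cne by simp
    ultimately have Tlt: "card T < t" using cardP by linarith
    have "total_dominating_set VG EG T"
      unfolding tds_iff
    proof (intro conjI ballI)
      show "T \<subseteq> VG" unfolding T_def using PV y by auto
    next
      fix x assume x: "x \<in> VG"
      show "\<exists>u\<in>T. EG u x"
      proof (cases "x = p1 \<or> x = p2")
        case True
        then show ?thesis using p1 p2 graphD(4)[OF G(1)] unfolding T_def by blast
      next
        case False
        note xn = this
        show ?thesis
        proof (cases "x \<in> P")
          case True
          have cxP: "c x \<in> P" by (rule cprop(1)[OF True])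
          have "EG (c x) x" using nbrP[OF True] cxP by simp
          moreover note cxP
          moreover have "c x \<noteq> c p1"
          proof
            assume "c x = c p1" then have "c (c x) = c (c p1)" by simp
            then show False using cc[OF True] cc[OF p1(1)] xn by simp
          qed
          moreover have "c x \<noteq> c p2"
          proof
            assume "c x = c p2" then have "c (c x) = c (c p2)" by simp
            then show False using cc[OF True] cc[OF p2(1)] xn by simp
          qed
          ultimately show ?thesis unfolding T_def by blast
        next
          case False
          show ?thesis
          proof (cases "x = y")
            case True
            have "EG (c p1) p1" using nbrP[OF p1(1)] c1P(1) by simp
            then have "p1 \<noteq> c p1" using graphD(5)[OF G(1)] by metis
            moreover have "p1 \<noteq> c p2" using p1(3) c2P(2) vs(4) by auto
            ultimately show ?thesis unfolding T_def using p1 True by blast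
          next
            case False
            obtain p3 where p3: "p3 \<in> P" "EG p3 x" "f p3 = v3"
              using dom1[OF x vs(3)] \<open>x \<notin> P\<close> by blast
            have "p3 \<noteq> c p1" "p3 \<noteq> c p2" using p3(3) c1P(2) c2P(2) vs by auto
            then show ?thesis unfolding T_def using p3 by blast
          qed
        qed
      qed
    qed
    then show False using tmin Tlt by fastforce
  qed
  obtain p where p: "p \<in> VG" using G(3) by auto
  have pP: "p \<in> P" using p VGP by simp
  have qP: "c p \<in> P" by (rule cprop(1)[OF pP])
  have q2: "EG (c p) p" using nbrP[OF pP] qP by simp
  then have q: "c p \<in> VG" "EG (c p) p" "c p \<noteq> p" using qP VGP graphD(5)[OF G(1)] by metis+
  have V2: "VG = {p, c p}"
  proof (rule ccontr)
    assume "VG \<noteq> {p, c p}"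
    then obtain y where "y \<in> VG" "y \<notin> {p, c p}" using p q by auto
    from conn_edge_out[OF G(1,2), of "{p, c p}" p y] this p q
    obtain a b where ab: "a \<in> {p, c p}" "b \<in> VG - {p, c p}" "EG a b" by auto
    then have "EG b a" "b \<in> P" using graphD(4)[OF G(1)] VGP by auto
    show False
    proof (cases "a = p")
      case True
      then have "b = c p" using nbrP[OF pP] \<open>EG b a\<close> \<open>b \<in> P\<close> by simp
      then show False using ab(2) by simp
    next
      case False
      then have "a = c p" using ab(1) by simp
      then have "b = c (c p)" using nbrP[OF qP] \<open>EG b a\<close> \<open>b \<in> P\<close> by simp
      then show False using ab(2) cc[OF pP] by simp
    qed
  qed
  have iso: "graph_iso VG EG K2_V K2_E"
    using iso_K2[OF G(1) V2] q graphD(4)[OF G(1)] by metis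
  have "domination_number VH EH = 1"
    using dn_eq1[OF H(1) Hne fH[OF pP] domv[OF pP]] .
  then show ?thesis using iso by simp
qed

lemma nbhd_ind_iff: "v \<in> nbhd X (induced_edges E X) S \<longleftrightarrow> v \<in> X \<and> (\<exists>u\<in>S. u \<in> X \<and> E u v)"
  unfolding nbhd_def induced_edges_def by auto

lemma K2case:
  assumes G: "graph VG EG" "connected_graph VG EG" and ni: "\<forall>x\<in>VG. \<exists>y. EG x y"
    and A: "A1 \<subseteq> VG" "A2 \<subseteq> VG"
    and C1: "\<forall>u\<in>VG. u \<in> A2 \<or> (\<exists>a\<in>A1. EG a u)"
    and C2: "\<forall>u\<in>VG. u \<in> A1 \<or> (\<exists>a\<in>A2. EG a u)"
    and tS: "total_domination_number VG EG = card A1 + card A2"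
  shows "in_F1 VG EG \<or> in_F2 VG EG \<or> in_F3 VG EG"
proof -
  define t where "t = total_domination_number VG EG"
  have tmin: "t \<le> card T" if "total_dominating_set VG EG T" for T using tdn_le[OF that] t_def by simp
  have finG: "finite VG" using G graphD by metis
  have sym: "EG y x" if "EG x y" for x y using graphD(4)[OF G(1) that] .
  have irr: "\<not> EG x x" for x using graphD(5)[OF G(1)] .
  have inV: "x \<in> VG" "y \<in> VG" if "EG x y" for x y using graphD(2,3)[OF G(1) that] by auto
  define W where "W = A1 \<inter> A2"
  define P where "P = A1 \<union> A2"
  define D1 where "D1 = A1 - W"
  define D2 where "D2 = A2 - W"
  define D where "D = P - W"
  have finA1: "finite A1" and finA2: "finite A2" using A finG finite_subset by blast+
  have PV: "P \<subseteq> VG" using A unfolding P_def by auto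
  have finP: "finite P" using PV finG finite_subset by blast
  have WP: "W \<subseteq> P" unfolding W_def P_def by auto
  have finW: "finite W" using WP finP finite_subset by blast
  have cardPW: "card A1 + card A2 = card P + card W"
    unfolding P_def W_def using card_Un_Int[OF finA1 finA2] by simp
  have DD: "D = D1 \<union> D2" "D1 \<inter> D2 = {}" unfolding D_def D1_def D2_def P_def W_def by auto
  have cardP: "card P = card D + card W" unfolding D_def
    using card_Diff_subset[OF finW WP] card_mono[OF finP WP] by simp
  have tval: "t = card D + 2 * card W" using tS cardPW cardP t_def by simp
  define R where "R = VG - nbhd VG EG P"
  have RW: "R \<subseteq> W"
  proof
    fix u assume u: "u \<in> R"
    then have uV: "u \<in> VG" and nb: "\<forall>a\<in>P. \<not> EG a u" unfolding R_def by (auto simp: Diff_iff Un_iff nbhd_iff)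
    have "u \<in> A2" using C1 uV nb unfolding P_def by auto
    moreover have "u \<in> A1" using C2 uV nb unfolding P_def by auto
    ultimately show "u \<in> W" unfolding W_def by auto
  qed
  have RV: "R \<subseteq> VG" unfolding R_def by auto
  obtain T0 where T0: "total_dominating_set VG EG T0" "card T0 \<le> card P + card R"
    using ext_tds[OF G(1) ni PV RV] unfolding R_def by blast
  have "card W \<le> card R" using tmin[OF T0(1)] T0(2) tval cardP by linarith
  then have WR: "W = R" using card_seteq[OF finW RW] by blast
  have Wnb: "\<not> EG p w" if "w \<in> W" "p \<in> P" for w p
    using that WR unfolding R_def by (auto simp: Diff_iff Un_iff nbhd_iff)
  define V1 where "V1 = W \<union> nbhd VG EG W"
  define V2 where "V2 = VG - V1"
  have WV: "W \<subseteq> VG" using WP PV by auto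
  have V1V: "V1 \<subseteq> VG" unfolding V1_def nbhd_def using WV by auto
  have V12: "V1 \<union> V2 = VG" unfolding V2_def using V1V by auto
  have PnW: "p \<notin> nbhd VG EG W" if "p \<in> P" for p
    using that Wnb sym unfolding Diff_iff Un_iff nbhd_iff by blast
  have DV2: "D \<subseteq> V2" unfolding D_def V2_def V1_def using PV PnW by auto
  have D1V2: "D1 \<subseteq> V2" and D2V2: "D2 \<subseteq> V2" using DV2 DD by auto
  have notnbW: "\<not> EG w u" if "u \<in> V2" "w \<in> W" for u w
    using that inV unfolding V2_def V1_def Diff_iff Un_iff nbhd_iff by blast
  have C1': "u \<in> D2 \<or> (\<exists>a\<in>D1. EG a u)" if u: "u \<in> V2" for u
  proof -
    have uV: "u \<in> VG" "u \<notin> W" using u unfolding V2_def V1_def by auto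
    show ?thesis
    proof (cases "u \<in> A2")
      case True then show ?thesis using uV unfolding D2_def by auto
    next
      case False
      then obtain a where "a \<in> A1" "EG a u" using C1 uV by auto
      moreover have "a \<notin> W" using notnbW[OF u] \<open>EG a u\<close> by auto
      ultimately show ?thesis unfolding D1_def by auto
    qed
  qed
  have C2': "u \<in> D1 \<or> (\<exists>a\<in>D2. EG a u)" if u: "u \<in> V2" for u
  proof -
    have uV: "u \<in> VG" "u \<notin> W" using u unfolding V2_def V1_def by auto
    show ?thesis
    proof (cases "u \<in> A1")
      case True then show ?thesis using uV unfolding D1_def by auto
    next
      case False
      then obtain a where "a \<in> A2" "EG a u" using C2 uV by auto
      moreover have "a \<notin> W" using notnbW[OF u] \<open>EG a u\<close> by auto
      ultimately show ?thesis unfolding D2_def by auto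
    qed
  qed
  have gV1: "graph V1 (induced_edges EG V1)" using induced_graph[OF G(1) V1V] .
  have niV1: "\<forall>x\<in>V1. \<exists>y. induced_edges EG V1 x y"
  proof
    fix x assume x: "x \<in> V1"
    show "\<exists>y. induced_edges EG V1 x y"
    proof (cases "x \<in> W")
      case True
      then obtain y where "EG x y" using ni WV by blast
      then have "y \<in> V1" using True inV unfolding V1_def Diff_iff Un_iff nbhd_iff by blast
      then show ?thesis using \<open>EG x y\<close> x unfolding induced_edges_def by blast
    next
      case False
      then obtain w where "w \<in> W" "EG w x" using x unfolding V1_def Diff_iff Un_iff nbhd_iff by blast
      then show ?thesis using x sym unfolding induced_edges_def V1_def by blast
    qed
  qed
  have WV1: "W \<subseteq> V1" unfolding V1_def by auto
  have covV1: "V1 - nbhd V1 (induced_edges EG V1) W \<subseteq> W"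
  proof
    fix v assume v: "v \<in> V1 - nbhd V1 (induced_edges EG V1) W"
    show "v \<in> W"
    proof (rule ccontr)
      assume "v \<notin> W"
      then obtain w where "w \<in> W" "EG w v" using v unfolding V1_def Diff_iff Un_iff nbhd_iff by blast
      then have "v \<in> nbhd V1 (induced_edges EG V1) W" using v WV1 unfolding Diff_iff Un_iff nbhd_ind_iff by blast
      then show False using v by blast
    qed
  qed
  obtain X1 where X1: "total_dominating_set V1 (induced_edges EG V1) X1" "card X1 \<le> card W + card W"
    using ext_tds[OF gV1 niV1 WV1 WV1 covV1] by blast
  have DtdsV2: "total_dominating_set V2 (induced_edges EG V2) D"
    unfolding tds_induced_iff
  proof (intro conjI ballI)
    show "D \<subseteq> V2" by (rule DV2)
  next
    fix v assume v: "v \<in> V2"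
    show "\<exists>u\<in>D. EG u v"
    proof (cases "v \<in> D2")
      case True
      then have "v \<notin> D1" using DD by auto
      then show ?thesis using C2'[OF v] DD by auto
    next
      case False
      then show ?thesis using C1'[OF v] DD by auto
    qed
  qed
  have minD: "card D \<le> card Y" if Y: "total_dominating_set V2 (induced_edges EG V2) Y" for Y
  proof -
    have "total_dominating_set VG EG (X1 \<union> Y)" by (rule tds_union[OF V12 X1(1) Y])
    then have "t \<le> card (X1 \<union> Y)" by (rule tmin)
    also have "\<dots> \<le> card X1 + card Y" by (rule card_Un_le)
    finally show ?thesis using X1(2) tval by linarith
  qed
  have tdV2: "total_domination_number V2 (induced_edges EG V2) = card D"
  proof -
    obtain Y where "total_dominating_set V2 (induced_edges EG V2) Y"
      "card Y = total_domination_number V2 (induced_edges EG V2)" using tdn_attained[OF DtdsV2] by blast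
    then show ?thesis using minD tdn_le[OF DtdsV2] by fastforce
  qed
  have minX: "2 * card W \<le> card X" if X: "total_dominating_set V1 (induced_edges EG V1) X" for X
  proof -
    have "total_dominating_set VG EG (X \<union> D)" by (rule tds_union[OF V12 X DtdsV2])
    then have "t \<le> card (X \<union> D)" by (rule tmin)
    also have "\<dots> \<le> card X + card D" by (rule card_Un_le)
    finally show ?thesis using tval by linarith
  qed
  have tdV1: "total_domination_number V1 (induced_edges EG V1) = 2 * card W"
  proof -
    obtain Y where "total_dominating_set V1 (induced_edges EG V1) Y"
      "card Y = total_domination_number V1 (induced_edges EG V1)" using tdn_attained[OF X1(1)] by blast
    then show ?thesis using minX tdn_le[OF X1(1)] X1(2) by fastforce
  qed
  have F1V1: "in_F1 V1 (induced_edges EG V1)"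
  proof -
    have Wdom: "dominating_set V1 (induced_edges EG V1) W"
      unfolding dominating_set_def
    proof (intro conjI ballI)
      show "W \<subseteq> V1" by (rule WV1)
    next
      fix v assume v: "v \<in> V1"
      show "v \<in> W \<or> (\<exists>u\<in>W. induced_edges EG V1 u v)"
        using v WV1 unfolding V1_def Diff_iff Un_iff nbhd_iff induced_edges_def by blast
    qed
    obtain Dm where Dm: "dominating_set V1 (induced_edges EG V1) Dm"
      "card Dm = domination_number V1 (induced_edges EG V1)" using dn_attained[OF Wdom] by blast
    have DmV: "Dm \<subseteq> V1" using Dm(1) unfolding dominating_set_def by auto
    have covDm: "V1 - nbhd V1 (induced_edges EG V1) Dm \<subseteq> Dm"
      using Dm(1) unfolding dominating_set_def nbhd_def by blast
    obtain X where "total_dominating_set V1 (induced_edges EG V1) X" "card X \<le> card Dm + card Dm"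
      using ext_tds[OF gV1 niV1 DmV DmV covDm] by blast
    then have "card W \<le> card Dm" using minX by fastforce
    moreover have "card Dm \<le> card W" using dn_le[OF Wdom] Dm(2) by simp
    ultimately show ?thesis unfolding in_F1_def using X1(1) tdV1 Dm(2) by auto
  qed
  have client: "\<exists>c\<in>V2. \<forall>u\<in>D. EG u c \<longleftrightarrow> u = d" if dD: "d \<in> D" for d
  proof -
    have "\<not> total_dominating_set V2 (induced_edges EG V2) (D - {d})"
    proof
      assume "total_dominating_set V2 (induced_edges EG V2) (D - {d})"
      then have "card D \<le> card (D - {d})" by (rule minD)
      moreover have "finite D" using finP unfolding D_def by auto
      ultimately show False using dD card_Diff1_less by fastforce
    qed
    moreover have "D - {d} \<subseteq> V2" using DV2 by auto
    ultimately obtain c where c: "c \<in> V2" "\<forall>u\<in>D - {d}. \<not> EG u c"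
      unfolding tds_induced_iff by blast
    obtain u where u: "u \<in> D" "EG u c" using DtdsV2 c(1) unfolding tds_induced_iff by blast
    then have "u = d" using c(2) by blast
    then have "EG d c" using u by simp
    then have "\<forall>u\<in>D. EG u c \<longleftrightarrow> u = d" using c(2) by auto
    then show ?thesis using c(1) by blast
  qed
  define cl where "cl d = (SOME c. c \<in> V2 \<and> (\<forall>u\<in>D. EG u c \<longleftrightarrow> u = d))" for d
  have clp: "cl d \<in> V2" "\<forall>u\<in>D. EG u (cl d) \<longleftrightarrow> u = d" if "d \<in> D" for d
  proof -
    have "\<exists>c. c \<in> V2 \<and> (\<forall>u\<in>D. EG u c \<longleftrightarrow> u = d)" using client[OF that] by blast
    then have "cl d \<in> V2 \<and> (\<forall>u\<in>D. EG u (cl d) \<longleftrightarrow> u = d)" unfolding cl_def by (rule someI_ex)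
    then show "cl d \<in> V2" "\<forall>u\<in>D. EG u (cl d) \<longleftrightarrow> u = d" by auto
  qed
  have clsame1: "cl d \<in> D1" if "d \<in> D1" for d
  proof -
    have dD: "d \<in> D" using that DD by auto
    have "\<not> (\<exists>a\<in>D2. EG a (cl d))"
    proof
      assume "\<exists>a\<in>D2. EG a (cl d)"
      then obtain a where "a \<in> D2" "EG a (cl d)" by blast
      then have "a = d" using clp(2)[OF dD] DD by auto
      then show False using \<open>a \<in> D2\<close> that DD by auto
    qed
    then show ?thesis using C2'[OF clp(1)[OF dD]] by blast
  qed
  have clsame2: "cl d \<in> D2" if "d \<in> D2" for d
  proof -
    have dD: "d \<in> D" using that DD by auto
    have "\<not> (\<exists>a\<in>D1. EG a (cl d))"
    proof
      assume "\<exists>a\<in>D1. EG a (cl d)"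
      then obtain a where "a \<in> D1" "EG a (cl d)" by blast
      then have "a = d" using clp(2)[OF dD] DD by auto
      then show False using \<open>a \<in> D1\<close> that DD by auto
    qed
    then show ?thesis using C1'[OF clp(1)[OF dD]] by blast
  qed
  have clD: "cl d \<in> D" if "d \<in> D" for d using clsame1 clsame2 that DD by blast
  have clcl: "cl (cl d) = d" if dD: "d \<in> D" for d
  proof -
    have qD: "cl d \<in> D" by (rule clD[OF dD])
    have "EG (cl d) (cl (cl d))" using clp(2)[OF qD] qD by simp
    then have "EG (cl (cl d)) (cl d)" by (rule sym)
    then show ?thesis using clp(2)[OF dD] clD[OF qD] by simp
  qed
  have nbrD: "\<forall>u\<in>D. EG u d \<longleftrightarrow> u = cl d" if dD: "d \<in> D" for d
  proof -
    have "\<forall>u\<in>D. EG u (cl (cl d)) \<longleftrightarrow> u = cl d" by (rule clp(2)[OF clD[OF dD]])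
    then show ?thesis using clcl[OF dD] by simp
  qed
  have nocross: "\<not> EG u d" if "d \<in> D1" "u \<in> D2" for u d
  proof
    assume "EG u d"
    moreover have "u \<in> D" "d \<in> D" using that DD by auto
    ultimately have "u = cl d" using nbrD by auto
    then show False using clsame1[OF that(1)] that(2) DD by auto
  qed
  have nocross2: "\<not> EG u d" if "d \<in> D2" "u \<in> D1" for u d
    using nocross[OF that(2,1)] sym by blast
  have degen: "W = {} \<and> in_F1 VG EG" if V2D: "V2 \<subseteq> D" and V2ne: "V2 \<noteq> {}"
  proof -
    have DeqV2: "D = V2" using V2D DV2 by auto
    obtain b where b: "b \<in> V2" using V2ne by auto
    have bD: "b \<in> D" using b DeqV2 by simp
    have Wempty: "W = {}"
    proof (rule ccontr)
      assume "W \<noteq> {}"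
      then obtain w where w: "w \<in> W" by auto
      have bV: "b \<in> VG" "b \<notin> V1" using b unfolding V2_def by auto
      obtain a b' where ab: "a \<in> V1" "b' \<in> VG - V1" "EG a b'"
        using conn_edge_out[OF G(1,2) V1V _ bV] w WV1 by blast
      have b'V2: "b' \<in> V2" using ab(2) unfolding V2_def by simp
      have aW: "a \<notin> W" using notnbW[OF b'V2] ab(3) by blast
      then obtain w0 where w0: "w0 \<in> W" "EG w0 a" using ab(1) unfolding V1_def Diff_iff Un_iff nbhd_iff by blast
      have b'D: "b' \<in> D" using b'V2 DeqV2 by simp
      define X where "X = W \<union> {a} \<union> (V2 - {cl b'})"
      define R' where "R' = W - {w0}"
      have XV: "X \<subseteq> VG" unfolding X_def using WV V1V ab(1) unfolding V2_def by auto
      have R'V: "R' \<subseteq> VG" unfolding R'_def using WV by auto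
      have cov: "VG - nbhd VG EG X \<subseteq> R'"
      proof
        fix v assume v: "v \<in> VG - nbhd VG EG X"
        then have vV: "v \<in> VG" and nv: "\<forall>x\<in>X. \<not> EG x v" unfolding Diff_iff Un_iff nbhd_iff by auto
        show "v \<in> R'"
        proof (cases "v \<in> V1")
          case True
          show ?thesis
          proof (cases "v \<in> W")
            case True
            have "v \<noteq> w0" using nv w0(2) sym unfolding X_def by blast
            then show ?thesis using True unfolding R'_def by auto
          next
            case False
            then obtain w' where "w' \<in> W" "EG w' v" using \<open>v \<in> V1\<close> unfolding V1_def Diff_iff Un_iff nbhd_iff by blast
            then show ?thesis using nv unfolding X_def by blast
          qed
        next
          case False
          then have vV2: "v \<in> V2" using vV unfolding V2_def by simp
          then have vD: "v \<in> D" using DeqV2 by simp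
          have clvD: "cl v \<in> D" by (rule clD[OF vD])
          have e: "EG (cl v) v" using nbrD[OF vD] clvD by simp
          show ?thesis
          proof (cases "v = b'")
            case True then show ?thesis using nv ab(3) unfolding X_def by blast
          next
            case False
            have "cl v \<noteq> cl b'"
            proof
              assume "cl v = cl b'"
              then have "cl (cl v) = cl (cl b')" by simp
              then show False using clcl[OF vD] clcl[OF b'D] False by simp
            qed
            then have "cl v \<in> X" using clvD DeqV2 unfolding X_def by auto
            then show ?thesis using nv e by blast
          qed
        qed
      qed
      obtain T where T: "total_dominating_set VG EG T" "card T \<le> card X + card R'"
        using ext_tds[OF G(1) ni XV R'V cov] by blast
      have finV2: "finite V2" using finG unfolding V2_def by auto
      have clb'V2: "cl b' \<in> V2" using clp(1)[OF b'D] .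
      have "card X \<le> card (W \<union> {a}) + card (V2 - {cl b'})" unfolding X_def by (rule card_Un_le)
      also have "card (W \<union> {a}) \<le> card W + 1" using card_Un_le[of W "{a}"] by simp
      also have "card (V2 - {cl b'}) = card V2 - 1" using clb'V2 finV2 by simp
      finally have cX: "card X \<le> card W + 1 + (card V2 - 1)" by simp
      have cR: "card R' = card W - 1" unfolding R'_def using w0(1) finW by simp
      have "card V2 > 0" using clb'V2 finV2 card_gt_0_iff by blast
      moreover have "card W > 0" using w0(1) finW card_gt_0_iff by blast
      moreover have "card D = card V2" using DeqV2 by simp
      ultimately have "card T < t" using T(2) cX cR tval by linarith
      then show False using tmin[OF T(1)] by simp
    qed
    then have V1e: "V1 = {}" unfolding V1_def nbhd_def by auto
    then have V2VG: "V2 = VG" unfolding V2_def by simp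
    have bV: "b \<in> VG" using b V2VG by simp
    have cbD: "cl b \<in> D" by (rule clD[OF bD])
    have VGeq: "VG = {b, cl b}"
    proof (rule ccontr)
      assume "VG \<noteq> {b, cl b}"
      moreover have "cl b \<in> VG" using cbD DeqV2 V2VG by simp
      ultimately obtain y where "y \<in> VG" "y \<notin> {b, cl b}" using bV by auto
      then obtain a z where az: "a \<in> {b, cl b}" "z \<in> VG - {b, cl b}" "EG a z"
        using conn_edge_out[OF G(1,2), of "{b, cl b}" b y] bV \<open>cl b \<in> VG\<close> by blast
      have zD: "z \<in> D" using az(2) DeqV2 V2VG by simp
      have "EG z a" using az(3) by (rule sym)
      show False
      proof (cases "a = b")
        case True
        then have "z = cl b" using nbrD[OF bD] zD \<open>EG z a\<close> by simp
        then show False using az(2) by simp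
      next
        case False
        then have "a = cl b" using az(1) by simp
        then have "z = cl (cl b)" using nbrD[OF cbD] zD \<open>EG z a\<close> by simp
        then show False using az(2) clcl[OF bD] by simp
      qed
    qed
    have ebc: "EG (cl b) b" using nbrD[OF bD] cbD by simp
    have bne: "b \<noteq> cl b" using ebc irr by metis
    have cVG: "card VG = 2" using VGeq bne by simp
    have t2: "t = 2" using tval Wempty DeqV2 V2VG cVG by simp
    have ebc': "EG b (cl b)" using ebc by (rule sym)
    have allb: "\<forall>v\<in>VG. v \<noteq> b \<longrightarrow> EG b v" using VGeq ebc' by auto
    have VGne: "VG \<noteq> {}" using bV by auto
    have "domination_number VG EG = 1" by (rule dn_eq1[OF G(1) VGne bV allb])
    moreover have "total_dominating_set VG EG VG" unfolding tds_iff
    proof (intro conjI ballI)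
      show "VG \<subseteq> VG" by simp
    next
      fix v assume "v \<in> VG"
      then obtain y where "EG v y" using ni by blast
      then show "\<exists>u\<in>VG. EG u v" using inV sym by blast
    qed
    ultimately have "in_F1 VG EG" unfolding in_F1_def using t2 t_def by auto
    then show ?thesis using Wempty by simp
  qed
  have indVG: "induced_edges EG VG = EG" by (rule induced_all[OF G(1)])
  show ?thesis
  proof (cases "V2 = {}")
    case True
    then have "V1 = VG" using V12 by simp
    then show ?thesis using F1V1 indVG by simp
  next
    case V2ne: False
    show ?thesis
    proof (cases "D1 = {} \<or> D2 = {}")
      case True
      then have "V2 \<subseteq> D" using C1' C2' DD by blast
      then show ?thesis using degen V2ne by blast
    next
      case False
      then have ne: "D1 \<noteq> {}" "D2 \<noteq> {}" by auto
      have F2V2: "in_F2 V2 (induced_edges EG V2)"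
        unfolding in_F2_def
      proof (intro exI conjI)
        show "total_dominating_set V2 (induced_edges EG V2) D" by (rule DtdsV2)
        show "card D = total_domination_number V2 (induced_edges EG V2)" using tdV2 by simp
        show "D1 \<noteq> {}" "D2 \<noteq> {}" by (rule ne(1), rule ne(2))
        show "D1 \<union> D2 = D" "D1 \<inter> D2 = {}" using DD by auto
        show "D1 = V2 - nbhd V2 (induced_edges EG V2) D2"
        proof
          show "D1 \<subseteq> V2 - nbhd V2 (induced_edges EG V2) D2"
            using D1V2 nocross by (auto simp: nbhd_ind_iff)
          show "V2 - nbhd V2 (induced_edges EG V2) D2 \<subseteq> D1"
          proof
            fix x assume x: "x \<in> V2 - nbhd V2 (induced_edges EG V2) D2"
            then have "x \<in> V2" "\<not> (\<exists>a\<in>D2. EG a x)" using D2V2 by (auto simp: nbhd_ind_iff)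
            then show "x \<in> D1" using C2' by blast
          qed
        qed
        show "D2 = V2 - nbhd V2 (induced_edges EG V2) D1"
        proof
          show "D2 \<subseteq> V2 - nbhd V2 (induced_edges EG V2) D1"
            using D2V2 nocross2 by (auto simp: nbhd_ind_iff)
          show "V2 - nbhd V2 (induced_edges EG V2) D1 \<subseteq> D2"
          proof
            fix x assume x: "x \<in> V2 - nbhd V2 (induced_edges EG V2) D1"
            then have "x \<in> V2" "\<not> (\<exists>a\<in>D1. EG a x)" using D1V2 by (auto simp: nbhd_ind_iff)
            then show "x \<in> D2" using C1' by blast
          qed
        qed
      qed
      show ?thesis
      proof (cases "W = {}")
        case True
        then have "V1 = {}" unfolding V1_def nbhd_def by auto
        then have "V2 = VG" unfolding V2_def by simp
        then show ?thesis using F2V2 indVG by simp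
      next
        case False
        then have V1ne: "V1 \<noteq> {}" unfolding V1_def by auto
        have "in_F3 VG EG" unfolding in_F3_def
          using V1ne V2ne V12 F1V1 F2V2 tdV1 tdV2 tval t_def
          by (intro exI[of _ V1] exI[of _ V2]) (auto simp: V2_def)
        then show ?thesis by simp
      qed
    qed
  qed
qed

lemma cart_iff: "cart_edges VG EG VH EH (a,b) (u,v) \<longleftrightarrow>
   a \<in> VG \<and> u \<in> VG \<and> b \<in> VH \<and> v \<in> VH \<and> ((a = u \<and> EH b v) \<or> (b = v \<and> EG a u))"
  unfolding cart_edges_def by simp

lemma domF1:
  assumes H: "VH = {h1, h2}" "EH h1 h2" "EH h2 h1" and XV: "X \<subseteq> VG"
    and Dm: "dominating_set X (induced_edges EG X) Dm"
    and u: "u \<in> X" and v: "v \<in> VH"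
  shows "\<exists>s\<in>Dm \<times> VH. cart_edges VG EG VH EH s (u,v)"
proof -
  have uV: "u \<in> VG" using u XV by auto
  have DmX: "Dm \<subseteq> X" using Dm unfolding dominating_set_def by auto
  show ?thesis
  proof (cases "u \<in> Dm")
    case True
    define v' where "v' = (if v = h1 then h2 else h1)"
    have v'H: "v' \<in> VH" and "EH v' v" unfolding v'_def using H v by auto
    then have "cart_edges VG EG VH EH (u, v') (u,v)" unfolding cart_iff using uV v by auto
    then show ?thesis using True v'H by blast
  next
    case False
    then obtain w where w: "w \<in> Dm" "induced_edges EG X w u" using Dm u unfolding dominating_set_def by blast
    then have "EG w u" "w \<in> VG" using DmX XV unfolding induced_edges_def by auto
    then have "cart_edges VG EG VH EH (w, v) (u,v)" unfolding cart_iff using uV v by auto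
    then show ?thesis using w(1) v by blast
  qed
qed

lemma domF2:
  assumes H: "VH = {h1, h2}" "EH h1 h2" "EH h2 h1" and XV: "X \<subseteq> VG"
    and D1: "D1 = X - nbhd X (induced_edges EG X) D2" and D2: "D2 = X - nbhd X (induced_edges EG X) D1"
    and u: "u \<in> X" and v: "v \<in> VH"
  shows "\<exists>s\<in>D1 \<times> {h1} \<union> D2 \<times> {h2}. cart_edges VG EG VH EH s (u,v)"
proof -
  have uV: "u \<in> VG" using u XV by auto
  have D1X: "D1 \<subseteq> X" and D2X: "D2 \<subseteq> X" using D1 D2 by auto
  have h: "h1 \<in> VH" "h2 \<in> VH" using H by auto
  show ?thesis
  proof (cases "v = h1")
    case True
    show ?thesis
    proof (cases "u \<in> nbhd X (induced_edges EG X) D1")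
      case True
      then obtain d where d: "d \<in> D1" "EG d u" unfolding nbhd_ind_iff by blast
      then have "cart_edges VG EG VH EH (d, h1) (u,v)" unfolding cart_iff using uV v \<open>v = h1\<close> D1X XV by auto
      then show ?thesis using d(1) by blast
    next
      case False
      then have "u \<in> D2" using D2 u by blast
      then have "cart_edges VG EG VH EH (u, h2) (u,v)" unfolding cart_iff using uV v \<open>v = h1\<close> H h by auto
      then show ?thesis using \<open>u \<in> D2\<close> by blast
    qed
  next
    case False
    then have vh2: "v = h2" using v H by auto
    show ?thesis
    proof (cases "u \<in> nbhd X (induced_edges EG X) D2")
      case True
      then obtain d where d: "d \<in> D2" "EG d u" unfolding nbhd_ind_iff by blast
      then have "cart_edges VG EG VH EH (d, h2) (u,v)" unfolding cart_iff using uV v vh2 D2X XV by auto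
      then show ?thesis using d(1) by blast
    next
      case False
      then have "u \<in> D1" using D1 u by blast
      then have "cart_edges VG EG VH EH (u, h1) (u,v)" unfolding cart_iff using uV v vh2 H h by auto
      then show ?thesis using \<open>u \<in> D1\<close> by blast
    qed
  qed
qed

lemma upper:
  assumes G: "graph VG EG" and H: "VH = {h1, h2}" "h1 \<noteq> h2" "EH h1 h2" "graph VH EH"
    and F: "in_F1 VG EG \<or> in_F2 VG EG \<or> in_F3 VG EG"
  shows "\<exists>S. total_dominating_set (VG \<times> VH) (cart_edges VG EG VH EH) S \<and> card S \<le> total_domination_number VG EG"
proof -
  have H21: "EH h2 h1" using graphD(4)[OF H(4) H(3)] .
  have finG: "finite VG" using G graphD by metis
  have cH: "card VH = 2" using H by simp
  have indVG: "induced_edges EG VG = EG" by (rule induced_all[OF G])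
  have tds_of: "total_dominating_set (VG \<times> VH) (cart_edges VG EG VH EH) S"
    if "S \<subseteq> VG \<times> VH" "\<forall>u\<in>VG. \<forall>v\<in>VH. \<exists>s\<in>S. cart_edges VG EG VH EH s (u,v)" for S
    using that unfolding tds_iff by auto
  have cardF1: "card (Dm \<times> VH) = 2 * card Dm" for Dm :: "'a set" using cH by (simp add: card_cartesian_product)
  have cardF2: "card (D1 \<times> {h1} \<union> D2 \<times> {h2}) \<le> card D1 + card D2" for D1 D2 :: "'a set"
  proof -
    have "card (D1 \<times> {h1} \<union> D2 \<times> {h2}) \<le> card (D1 \<times> {h1}) + card (D2 \<times> {h2})" by (rule card_Un_le)
    then show ?thesis by (simp add: card_cartesian_product)
  qed
  from F show ?thesis
  proof (elim disjE)
    assume F1: "in_F1 VG EG"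
    then have "in_F1 VG (induced_edges EG VG)" using indVG by simp
    then have eq: "total_domination_number VG EG = 2 * domination_number VG EG"
      unfolding in_F1_def indVG by blast
    have "dominating_set VG EG VG" unfolding dominating_set_def by auto
    then obtain Dm where Dm: "dominating_set VG EG Dm" "card Dm = domination_number VG EG" using dn_attained by blast
    have Dmi: "dominating_set VG (induced_edges EG VG) Dm" using Dm(1) indVG by simp
    have "Dm \<times> VH \<subseteq> VG \<times> VH" using Dm(1) unfolding dominating_set_def by auto
    moreover have "\<forall>u\<in>VG. \<forall>v\<in>VH. \<exists>s\<in>Dm \<times> VH. cart_edges VG EG VH EH s (u,v)"
      using domF1[OF H(1,3) H21 order_refl Dmi] by blast
    ultimately have "total_dominating_set (VG \<times> VH) (cart_edges VG EG VH EH) (Dm \<times> VH)" by (rule tds_of)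
    moreover have "card (Dm \<times> VH) \<le> total_domination_number VG EG" using cardF1[of Dm] Dm(2) eq by simp
    ultimately show ?thesis by blast
  next
    assume F2: "in_F2 VG EG"
    then obtain D D1 D2 where D: "total_dominating_set VG EG D" "card D = total_domination_number VG EG"
      "D1 \<union> D2 = D" "D1 \<inter> D2 = {}" "D1 = VG - nbhd VG EG D2" "D2 = VG - nbhd VG EG D1"
      unfolding in_F2_def by blast
    have Di: "D1 = VG - nbhd VG (induced_edges EG VG) D2" "D2 = VG - nbhd VG (induced_edges EG VG) D1"
      using D(5,6) indVG by simp_all
    have "D1 \<subseteq> VG" "D2 \<subseteq> VG" using D(5,6) by blast+
    then have finD: "finite D1" "finite D2" using finG finite_subset by blast+
    have cD: "card D = card D1 + card D2" using D(3,4) card_Un_disjoint[OF finD] by simp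
    have "D1 \<times> {h1} \<union> D2 \<times> {h2} \<subseteq> VG \<times> VH" using D(5,6) H(1) by auto
    moreover have "\<forall>u\<in>VG. \<forall>v\<in>VH. \<exists>s\<in>D1 \<times> {h1} \<union> D2 \<times> {h2}. cart_edges VG EG VH EH s (u,v)"
      using domF2[OF H(1,3) H21 order_refl Di] by blast
    ultimately have "total_dominating_set (VG \<times> VH) (cart_edges VG EG VH EH) (D1 \<times> {h1} \<union> D2 \<times> {h2})" by (rule tds_of)
    moreover have "card (D1 \<times> {h1} \<union> D2 \<times> {h2}) \<le> total_domination_number VG EG"
      using cardF2[of D1 D2] cD D(2) by simp
    ultimately show ?thesis by blast
  next
    assume F3: "in_F3 VG EG"
    then obtain V1 V2 where "V1 \<noteq> {}" "V2 \<noteq> {}" and V: "V1 \<union> V2 = VG" and "V1 \<inter> V2 = {}"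
      and F1: "in_F1 V1 (induced_edges EG V1)"
      and F2: "in_F2 V2 (induced_edges EG V2)"
      and teq: "total_domination_number VG EG =
        total_domination_number V1 (induced_edges EG V1) + total_domination_number V2 (induced_edges EG V2)"
      unfolding in_F3_def by blast
    have V1V: "V1 \<subseteq> VG" and V2V: "V2 \<subseteq> VG" using V by auto
    have eq: "total_domination_number V1 (induced_edges EG V1) = 2 * domination_number V1 (induced_edges EG V1)"
      using F1 unfolding in_F1_def by blast
    have "dominating_set V1 (induced_edges EG V1) V1" unfolding dominating_set_def by auto
    then obtain Dm where Dm: "dominating_set V1 (induced_edges EG V1) Dm" "card Dm = domination_number V1 (induced_edges EG V1)"
      using dn_attained by blast
    obtain D D1 D2 where D: "total_dominating_set V2 (induced_edges EG V2) D" "card D = total_domination_number V2 (induced_edges EG V2)"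
      "D1 \<union> D2 = D" "D1 \<inter> D2 = {}" "D1 = V2 - nbhd V2 (induced_edges EG V2) D2" "D2 = V2 - nbhd V2 (induced_edges EG V2) D1"
      using F2 unfolding in_F2_def by blast
    have "D1 \<subseteq> VG" "D2 \<subseteq> VG" using D(5,6) V2V by blast+
    then have finD: "finite D1" "finite D2" using finG finite_subset by blast+
    have cD: "card D = card D1 + card D2" using D(3,4) card_Un_disjoint[OF finD] by simp
    define S where "S = Dm \<times> VH \<union> (D1 \<times> {h1} \<union> D2 \<times> {h2})"
    have DmV: "Dm \<subseteq> VG" using Dm(1) V1V unfolding dominating_set_def by blast
    have D1V: "D1 \<subseteq> VG" using D(5) V2V by blast
    have D2V: "D2 \<subseteq> VG" using D(6) V2V by blast
    have "S \<subseteq> VG \<times> VH" unfolding S_def using DmV D1V D2V H(1) by blast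
    moreover have "\<forall>u\<in>VG. \<forall>v\<in>VH. \<exists>s\<in>S. cart_edges VG EG VH EH s (u,v)"
    proof (intro ballI)
      fix u v assume u: "u \<in> VG" and v: "v \<in> VH"
      show "\<exists>s\<in>S. cart_edges VG EG VH EH s (u,v)"
      proof (cases "u \<in> V1")
        case True
        obtain s where "s \<in> Dm \<times> VH" "cart_edges VG EG VH EH s (u,v)" using domF1[OF H(1,3) H21 V1V Dm(1) True v] by blast
        moreover have "Dm \<times> VH \<subseteq> S" unfolding S_def by (rule Un_upper1)
        ultimately show ?thesis by blast
      next
        case False
        then have "u \<in> V2" using u V by auto
        obtain s where "s \<in> D1 \<times> {h1} \<union> D2 \<times> {h2}" "cart_edges VG EG VH EH s (u,v)"
          using domF2[OF H(1,3) H21 V2V D(5,6) \<open>u \<in> V2\<close> v] by blast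
        moreover have "D1 \<times> {h1} \<union> D2 \<times> {h2} \<subseteq> S" unfolding S_def by (rule Un_upper2)
        ultimately show ?thesis by blast
      qed
    qed
    ultimately have "total_dominating_set (VG \<times> VH) (cart_edges VG EG VH EH) S" by (rule tds_of)
    moreover have "card S \<le> card (Dm \<times> VH) + card (D1 \<times> {h1} \<union> D2 \<times> {h2})" unfolding S_def by (rule card_Un_le)
    ultimately show ?thesis using cardF1[of Dm] cardF2[of D1 D2] cD D(2) Dm(2) eq teq
      by (intro exI[of _ S] conjI) linarith+
  qed
qed

theorem theorem4:
  fixes VG :: "'a set" and EG :: "'a \<Rightarrow> 'a \<Rightarrow> bool"
    and VH :: "'b set" and EH :: "'b \<Rightarrow> 'b \<Rightarrow> bool"
  assumes "graph VG EG" "connected_graph VG EG" "nontrivial_graph VG EG"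
    and "graph VH EH" "connected_graph VH EH" "nontrivial_graph VH EH"
    and "total_domination_number VH EH = 2"
  shows "total_domination_number VG EG
           = total_domination_number (VG \<times> VH) (cart_edges VG EG VH EH)
         \<longleftrightarrow> (graph_iso VG EG K2_V K2_E \<and> domination_number VH EH = 1)
            \<or> (graph_iso VH EH K2_V K2_E \<and> (in_F1 VG EG \<or> in_F2 VG EG \<or> in_F3 VG EG))"
proof -
  have niG: "\<forall>x\<in>VG. \<exists>y. EG x y" using noiso[OF assms(1-3)] by blast
  have cG: "card VG \<ge> 2" and cH: "card VH \<ge> 2" using assms(3,6) unfolding nontrivial_graph_def by auto
  have VGne: "VG \<noteq> {}" using cG by auto
  have VHne: "VH \<noteq> {}" using cH by auto
  have symG: "EG y x" if "EG x y" for x y using graphD(4)[OF assms(1) that] .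
  have inG: "x \<in> VG" "y \<in> VG" if "EG x y" for x y using graphD(2,3)[OF assms(1) that] by auto
  have prod_tds: "total_dominating_set (VG \<times> VH) (cart_edges VG EG VH EH) (VG \<times> VH)"
    unfolding tds_iff
  proof (intro conjI ballI)
    show "VG \<times> VH \<subseteq> VG \<times> VH" by simp
  next
    fix x assume x: "x \<in> VG \<times> VH"
    then obtain u v where uv: "x = (u,v)" "u \<in> VG" "v \<in> VH" by auto
    then obtain y where "EG u y" using niG by blast
    then have "EG y u" "y \<in> VG" using symG inG by auto
    then have "cart_edges VG EG VH EH (y,v) (u,v)" unfolding cart_iff using uv by auto
    then show "\<exists>s\<in>VG \<times> VH. cart_edges VG EG VH EH s x" using uv \<open>y \<in> VG\<close> by auto
  qed
  have LBf: "total_domination_number VG EG \<le> total_domination_number (VG \<times> VH) (cart_edges VG EG VH EH)"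
  proof -
    obtain S where S: "total_dominating_set (VG \<times> VH) (cart_edges VG EG VH EH) S"
      "card S = total_domination_number (VG \<times> VH) (cart_edges VG EG VH EH)"
      using tdn_attained[OF prod_tds] by blast
    note lb = LB[OF assms(1) niG assms(4) VHne S(1)]
    show ?thesis using lb(5,6) S(2) by linarith
  qed
  show ?thesis
  proof
    assume eq: "total_domination_number VG EG = total_domination_number (VG \<times> VH) (cart_edges VG EG VH EH)"
    obtain S where S: "total_dominating_set (VG \<times> VH) (cart_edges VG EG VH EH) S"
      "card S = total_domination_number (VG \<times> VH) (cart_edges VG EG VH EH)"
      using tdn_attained[OF prod_tds] by blast
    have cS: "card S = total_domination_number VG EG" using S(2) eq by simp
    show "(graph_iso VG EG K2_V K2_E \<and> domination_number VH EH = 1)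
            \<or> (graph_iso VH EH K2_V K2_E \<and> (in_F1 VG EG \<or> in_F2 VG EG \<or> in_F3 VG EG))"
    proof (cases "card VH \<ge> 3")
      case True
      then show ?thesis using VH3[OF assms(1,2) VGne niG assms(4) True S(1) cS] by blast
    next
      case False
      then have "card VH = 2" using cH by simp
      then obtain h1 h2 where VH: "VH = {h1, h2}" "h1 \<noteq> h2" unfolding card_2_iff by blast
      obtain a b where ab: "a \<in> {h1}" "b \<in> VH - {h1}" "EH a b"
        using conn_edge_out[OF assms(4,5), of "{h1}" h1 h2] VH by blast
      have E12: "EH h1 h2" using ab VH by auto
      have iso: "graph_iso VH EH K2_V K2_E" by (rule iso_K2[OF assms(4) VH E12])
      define A1 where "A1 = {u. (u,h1) \<in> S}"
      define A2 where "A2 = {u. (u,h2) \<in> S}"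
      have SV: "S \<subseteq> VG \<times> VH" using S(1) unfolding tds_iff by blast
      have A: "A1 \<subseteq> VG" "A2 \<subseteq> VG" unfolding A1_def A2_def using SV by auto
      have irrH: "\<not> EH x x" for x using graphD(5)[OF assms(4)] .
      have dom: "\<exists>(a,b)\<in>S. cart_edges VG EG VH EH (a,b) (u,v)" if "u \<in> VG" "v \<in> VH" for u v
        using S(1) that unfolding tds_iff by blast
      have C1: "\<forall>u\<in>VG. u \<in> A2 \<or> (\<exists>a\<in>A1. EG a u)"
      proof
        fix u assume u: "u \<in> VG"
        obtain a b where ab: "(a,b) \<in> S" "cart_edges VG EG VH EH (a,b) (u,h1)" using dom[OF u] VH by blast
        then have "(a = u \<and> EH b h1 \<and> b \<in> VH) \<or> (b = h1 \<and> EG a u)" unfolding cart_iff by auto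
        then show "u \<in> A2 \<or> (\<exists>a\<in>A1. EG a u)"
        proof
          assume "a = u \<and> EH b h1 \<and> b \<in> VH"
          then have "b = h2" using VH irrH by auto
          then show ?thesis using ab(1) \<open>a = u \<and> EH b h1 \<and> b \<in> VH\<close> unfolding A2_def by auto
        next
          assume "b = h1 \<and> EG a u"
          then show ?thesis using ab(1) unfolding A1_def by auto
        qed
      qed
      have C2: "\<forall>u\<in>VG. u \<in> A1 \<or> (\<exists>a\<in>A2. EG a u)"
      proof
        fix u assume u: "u \<in> VG"
        obtain a b where ab: "(a,b) \<in> S" "cart_edges VG EG VH EH (a,b) (u,h2)" using dom[OF u] VH by blast
        then have "(a = u \<and> EH b h2 \<and> b \<in> VH) \<or> (b = h2 \<and> EG a u)" unfolding cart_iff by auto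
        then show "u \<in> A1 \<or> (\<exists>a\<in>A2. EG a u)"
        proof
          assume "a = u \<and> EH b h2 \<and> b \<in> VH"
          then have "b = h1" using VH irrH by auto
          then show ?thesis using ab(1) \<open>a = u \<and> EH b h2 \<and> b \<in> VH\<close> unfolding A1_def by auto
        next
          assume "b = h2 \<and> EG a u"
          then show ?thesis using ab(1) unfolding A2_def by auto
        qed
      qed
      have finG: "finite VG" using assms(1) graphD by metis
      have finA: "finite A1" "finite A2" using A finG finite_subset by blast+
      have Seq: "S = (\<lambda>u. (u,h1)) ` A1 \<union> (\<lambda>u. (u,h2)) ` A2"
        unfolding A1_def A2_def using SV VH by auto
      have "card S = card ((\<lambda>u. (u,h1)) ` A1) + card ((\<lambda>u. (u,h2)) ` A2)"
        unfolding Seq by (rule card_Un_disjoint) (use finA VH in auto)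
      also have "\<dots> = card A1 + card A2" by (simp add: card_image inj_on_def)
      finally have tS: "total_domination_number VG EG = card A1 + card A2" using cS by simp
      have "in_F1 VG EG \<or> in_F2 VG EG \<or> in_F3 VG EG" by (rule K2case[OF assms(1,2) niG A C1 C2 tS])
      then show ?thesis using iso by blast
    qed
  next
    assume disj: "(graph_iso VG EG K2_V K2_E \<and> domination_number VH EH = 1)
            \<or> (graph_iso VH EH K2_V K2_E \<and> (in_F1 VG EG \<or> in_F2 VG EG \<or> in_F3 VG EG))"
    show "total_domination_number VG EG = total_domination_number (VG \<times> VH) (cart_edges VG EG VH EH)"
      using disj
    proof (elim disjE)
      assume "graph_iso VG EG K2_V K2_E \<and> domination_number VH EH = 1"
      then have iso: "graph_iso VG EG K2_V K2_E" and d1: "domination_number VH EH = 1" by auto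
      obtain f where f: "bij_betw f VG K2_V" "\<forall>x\<in>VG. \<forall>y\<in>VG. EG x y \<longleftrightarrow> K2_E (f x) (f y)"
        using iso unfolding graph_iso_def by blast
      have fim: "f ` VG = UNIV" using f(1) unfolding bij_betw_def K2_V_def by simp
      obtain a where a: "a \<in> VG" "f a = True" using fim by (metis UNIV_I imageE)
      obtain b where b: "b \<in> VG" "f b = False" using fim by (metis UNIV_I imageE)
      have injf: "inj_on f VG" using f(1) unfolding bij_betw_def by simp
      have eab: "EG a b" "EG b a" using f(2) a b unfolding K2_E_def by auto
      have abne: "a \<noteq> b" using a b by auto
      have VGab: "VG = {a, b}"
      proof
        show "VG \<subseteq> {a, b}"
        proof
          fix x assume x: "x \<in> VG"
          show "x \<in> {a, b}"
          proof (cases "f x")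
            case True then have "f x = f a" using a by simp
            then have "x = a" using inj_onD[OF injf _ x a(1)] by blast
            then show ?thesis by simp
          next
            case False then have "f x = f b" using b by simp
            then have "x = b" using inj_onD[OF injf _ x b(1)] by blast
            then show ?thesis by simp
          qed
        qed
        show "{a, b} \<subseteq> VG" using a b by simp
      qed
      have "dominating_set VH EH VH" unfolding dominating_set_def by auto
      then obtain Dm where Dm: "dominating_set VH EH Dm" "card Dm = 1" using dn_attained d1 by metis
      then obtain h where Dmh: "Dm = {h}" using card_1_singletonE by blast
      have hV: "h \<in> VH" and hdom: "\<forall>v\<in>VH. v = h \<or> EH h v"
        using Dm(1) unfolding Dmh dominating_set_def by auto
      have tG2: "total_domination_number VG EG = 2"
      proof -
        have "total_dominating_set VG EG VG" unfolding tds_iff using VGab eab by auto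
        then have le: "total_domination_number VG EG \<le> 2"
          using tdn_le[of VG EG VG] VGab abne by simp
        obtain T where "total_dominating_set VG EG T" "card T = total_domination_number VG EG"
          using tdn_attained[OF \<open>total_dominating_set VG EG VG\<close>] by blast
        then have "2 \<le> total_domination_number VG EG" using tds_card_ge2[OF assms(1) _ VGne] by metis
        then show ?thesis using le by simp
      qed
      define T where "T = {(a,h), (b,h)}"
      have "total_dominating_set (VG \<times> VH) (cart_edges VG EG VH EH) T"
        unfolding tds_iff
      proof (intro conjI ballI)
        show "T \<subseteq> VG \<times> VH" unfolding T_def using a b hV by auto
      next
        fix x assume x: "x \<in> VG \<times> VH"
        then obtain u v where uv: "x = (u,v)" "u \<in> VG" "v \<in> VH" by auto
        show "\<exists>s\<in>T. cart_edges VG EG VH EH s x"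
        proof (cases "v = h")
          case True
          show ?thesis
          proof (cases "u = a")
            case True
            then have "cart_edges VG EG VH EH (b,h) x" unfolding cart_iff uv(1) using eab a b \<open>v = h\<close> hV by auto
            then show ?thesis unfolding T_def by auto
          next
            case False
            then have "u = b" using uv VGab by auto
            then have "cart_edges VG EG VH EH (a,h) x" unfolding cart_iff uv(1) using eab a b \<open>v = h\<close> hV by auto
            then show ?thesis unfolding T_def by auto
          qed
        next
          case False
          then have "EH h v" using hdom uv by auto
          then have "cart_edges VG EG VH EH (u,h) x" unfolding cart_iff uv(1) using uv hV by auto
          moreover have "(u,h) \<in> T" unfolding T_def using uv VGab by auto
          ultimately show ?thesis by blast
        qed
      qed
      moreover have "card T \<le> 2" unfolding T_def by (simp add: card_insert_if)
      ultimately have "total_domination_number (VG \<times> VH) (cart_edges VG EG VH EH) \<le> 2"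
        using tdn_le by fastforce
      then show ?thesis using LBf tG2 by simp
    next
      assume "graph_iso VH EH K2_V K2_E \<and> (in_F1 VG EG \<or> in_F2 VG EG \<or> in_F3 VG EG)"
      then have iso: "graph_iso VH EH K2_V K2_E" and F: "in_F1 VG EG \<or> in_F2 VG EG \<or> in_F3 VG EG" by auto
      obtain g where g: "bij_betw g VH K2_V" "\<forall>x\<in>VH. \<forall>y\<in>VH. EH x y \<longleftrightarrow> K2_E (g x) (g y)"
        using iso unfolding graph_iso_def by blast
      have gim: "g ` VH = UNIV" using g(1) unfolding bij_betw_def K2_V_def by simp
      obtain h1 where h1: "h1 \<in> VH" "g h1 = True" using gim by (metis UNIV_I imageE)
      obtain h2 where h2: "h2 \<in> VH" "g h2 = False" using gim by (metis UNIV_I imageE)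
      have injg: "inj_on g VH" using g(1) unfolding bij_betw_def by simp
      have e12: "EH h1 h2" using g(2) h1 h2 unfolding K2_E_def by auto
      have hne: "h1 \<noteq> h2" using h1 h2 by auto
      have VHeq: "VH = {h1, h2}"
      proof
        show "VH \<subseteq> {h1, h2}"
        proof
          fix x assume x: "x \<in> VH"
          show "x \<in> {h1, h2}"
          proof (cases "g x")
            case True then have "g x = g h1" using h1 by simp
            then have "x = h1" using inj_onD[OF injg _ x h1(1)] by blast
            then show ?thesis by simp
          next
            case False then have "g x = g h2" using h2 by simp
            then have "x = h2" using inj_onD[OF injg _ x h2(1)] by blast
            then show ?thesis by simp
          qed
        qed
        show "{h1, h2} \<subseteq> VH" using h1 h2 by simp
      qed
      obtain S where S: "total_dominating_set (VG \<times> VH) (cart_edges VG EG VH EH) S"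
        "card S \<le> total_domination_number VG EG"
        using upper[OF assms(1) VHeq hne e12 assms(4) F] by blast
      have "total_domination_number (VG \<times> VH) (cart_edges VG EG VH EH) \<le> total_domination_number VG EG"
        using tdn_le[OF S(1)] S(2) by simp
      then show ?thesis using LBf by simp
    qed
  qed
qed

end
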